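(* Let $G$ be a finite simple graph on $[d]$. Then $L_G : x_{\emptyset}^{\infty}=J_G : x_{\emptyset}^{\infty}=\langle [I_G]_2\rangle : x_{\emptyset}^{\infty}=I_G.$
   Context: A stable set of $G$ is a subset of $[d]$ with no edge of $G$ (including $\emptyset$ and singletons); $S(G)$ is the set of stable sets; $R[G]=\mathbb{K}[x_S : S\in S(G)]$ over a field $\mathbb{K}$, all variables of degree $1$. $I_G$ is the kernel of $\pi:R[G]\to\mathbb{K}[t_1,\dots,t_d,s]$, $\pi(x_S)=s\prod_{j\in S}t_j$. $\langle [I_G]_2\rangle$ is the ideal generated by the degree-$2$ homogeneous elements of $I_G$. $J_G$ is the ideal generated by all binomials $x_{S_1}x_{S_2}-x_{S_3}x_{S_4}$ with $S_i\in S(G)$, $S_1\cap S_2=S_3\cap S_4=\emptyset$, $S_1\cup S_2=S_3\cup S_4$ (i.e. ${\bf x}_f-{\bf x}_g$ for $2$-colorings $f,g$ of a common induced subgraph, where ${\bf x}_f=x_{f^{-1}(1)}x_{f^{-1}(2)}$). $L_G=\langle x_{S\setminus\{i\}}x_{\{i\}}-x_Sx_\emptyset : i\in S\in S(G),\ |S|\ge2\rangle$. For an ideal $I$ and polynomial $h$, $I:h^\infty=\{p : h^np\in I \text{ for some } n>0\}$. *)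

theory Defs
  imports "HOL-Library.Poly_Mapping"
begin

text \<open>The ring R[G] has variables x_S indexed by stable sets S (type nat set);
it is the subring of polynomials whose monomials only involve stable sets.
The target ring K[t_1..t_d, s] uses variables of type nat option:
None is s, Some j is t_j.\<close>

definition simple_graph_on :: "nat \<Rightarrow> nat set set \<Rightarrow> bool" where
  "simple_graph_on d E \<longleftrightarrow>
     (\<forall>e\<in>E. \<exists>i j. e = {i, j} \<and> i \<noteq> j \<and> i \<in> {1..d} \<and> j \<in> {1..d})"

definition stable :: "nat \<Rightarrow> nat set set \<Rightarrow> nat set \<Rightarrow> bool" where
  "stable d E S \<longleftrightarrow> S \<subseteq> {1..d} \<and> (\<forall>e\<in>E. \<not> e \<subseteq> S)"

type_synonym ('v, 'k) mpoly = "('v \<Rightarrow>\<^sub>0 nat) \<Rightarrow>\<^sub>0 'k"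

definition var :: "'v \<Rightarrow> ('v, 'k::field) mpoly" where
  "var v = Poly_Mapping.single (Poly_Mapping.single v 1) 1"

definition const :: "'k \<Rightarrow> ('v, 'k::field) mpoly" where
  "const c = Poly_Mapping.single 0 c"

definition RG :: "nat \<Rightarrow> nat set set \<Rightarrow> (nat set, 'k::field) mpoly set" where
  "RG d E = {p. \<forall>m\<in>Poly_Mapping.keys p. Poly_Mapping.keys m \<subseteq> Collect (stable d E)}"

definition subst :: "('v \<Rightarrow> ('w, 'k::field) mpoly) \<Rightarrow> ('v, 'k) mpoly \<Rightarrow> ('w, 'k) mpoly" where
  "subst f p = (\<Sum>m\<in>Poly_Mapping.keys p. const (Poly_Mapping.lookup p m) * (\<Prod>v\<in>Poly_Mapping.keys m. f v ^ Poly_Mapping.lookup m v))"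

definition piG :: "(nat set, 'k::field) mpoly \<Rightarrow> (nat option, 'k) mpoly" where
  "piG = subst (\<lambda>S. var None * (\<Prod>j\<in>S. var (Some j)))"

definition IG :: "nat \<Rightarrow> nat set set \<Rightarrow> (nat set, 'k::field) mpoly set" where
  "IG d E = {p \<in> RG d E. piG p = 0}"

definition mdeg :: "('v \<Rightarrow>\<^sub>0 nat) \<Rightarrow> nat" where
  "mdeg m = (\<Sum>v\<in>Poly_Mapping.keys m. Poly_Mapping.lookup m v)"

definition homog_part :: "nat \<Rightarrow> ('v, 'k::field) mpoly set \<Rightarrow> ('v, 'k) mpoly set" where
  "homog_part n A = {p \<in> A. \<forall>m\<in>Poly_Mapping.keys p. mdeg m = n}"

inductive_set ideal_gen :: "('v, 'k::field) mpoly set \<Rightarrow> ('v, 'k) mpoly set \<Rightarrow> ('v, 'k) mpoly set"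
  for A T where
  gen: "t \<in> T \<Longrightarrow> t \<in> ideal_gen A T"
| zero: "0 \<in> ideal_gen A T"
| add: "p \<in> ideal_gen A T \<Longrightarrow> q \<in> ideal_gen A T \<Longrightarrow> p + q \<in> ideal_gen A T"
| mult: "r \<in> A \<Longrightarrow> p \<in> ideal_gen A T \<Longrightarrow> r * p \<in> ideal_gen A T"

definition saturation :: "('v, 'k::field) mpoly set \<Rightarrow> ('v, 'k) mpoly set \<Rightarrow> ('v, 'k) mpoly \<Rightarrow> ('v, 'k) mpoly set" where
  "saturation A I h = {p \<in> A. \<exists>n>0. h ^ n * p \<in> I}"

definition JG_gens :: "nat \<Rightarrow> nat set set \<Rightarrow> (nat set, 'k::field) mpoly set" where
  "JG_gens d E = {var S1 * var S2 - var S3 * var S4 | S1 S2 S3 S4.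
     stable d E S1 \<and> stable d E S2 \<and> stable d E S3 \<and> stable d E S4 \<and>
     S1 \<inter> S2 = {} \<and> S3 \<inter> S4 = {} \<and> S1 \<union> S2 = S3 \<union> S4}"

definition LG_gens :: "nat \<Rightarrow> nat set set \<Rightarrow> (nat set, 'k::field) mpoly set" where
  "LG_gens d E = {var (S - {i}) * var {i} - var S * var {} | S i.
     stable d E S \<and> i \<in> S \<and> card S \<ge> 2}"

definition JG :: "nat \<Rightarrow> nat set set \<Rightarrow> (nat set, 'k::field) mpoly set" where
  "JG d E = ideal_gen (RG d E) (JG_gens d E)"

definition LG :: "nat \<Rightarrow> nat set set \<Rightarrow> (nat set, 'k::field) mpoly set" where
  "LG d E = ideal_gen (RG d E) (LG_gens d E)"

end

theory Submission
  imports Defs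
begin

lemma pm_expand: "(p::'a \<Rightarrow>\<^sub>0 'b::comm_monoid_add) = (\<Sum>k\<in>Poly_Mapping.keys p. Poly_Mapping.single k (Poly_Mapping.lookup p k))"
proof (rule poly_mapping_eqI)
  fix x
  have "Poly_Mapping.lookup (\<Sum>k\<in>Poly_Mapping.keys p. Poly_Mapping.single k (Poly_Mapping.lookup p k)) x
     = (\<Sum>k\<in>Poly_Mapping.keys p. (if k = x then Poly_Mapping.lookup p k else 0))"
    by (simp add: lookup_sum lookup_single when_def)
  also have "\<dots> = Poly_Mapping.lookup p x"
    by (simp add: sum.delta in_keys_iff)
  finally show "Poly_Mapping.lookup p x = Poly_Mapping.lookup (\<Sum>k\<in>Poly_Mapping.keys p. Poly_Mapping.single k (Poly_Mapping.lookup p k)) x" by simp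
qed

lemma single_pow: "Poly_Mapping.single k (1::'b::comm_semiring_1) ^ n = Poly_Mapping.single (\<Sum>i<n. (k::'a::comm_monoid_add)) 1"
  by (induction n) (simp_all add: mult_single add.commute)

lemma prod_single: "(\<Prod>i\<in>A. Poly_Mapping.single (k i) (1::'b::comm_semiring_1)) = Poly_Mapping.single (\<Sum>i\<in>A. (k i::'a::comm_monoid_add)) 1"
  by (induction A rule: infinite_finite_induct) (simp_all add: mult_single)

lemma const_mult: "const (a * b) = (const a * const b :: ('v,'k::field) mpoly)"
  by (simp add: const_def mult_single)
lemma const_add: "const (a + b) = (const a + const b :: ('v,'k::field) mpoly)"
  by (simp add: const_def single_add)
lemma const_zero[simp]: "const 0 = (0 :: ('v,'k::field) mpoly)"
  by (simp add: const_def)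
lemma const_one[simp]: "const 1 = (1 :: ('v,'k::field) mpoly)"
  by (simp add: const_def)
lemma const_minus_one: "const (-1) = (-1 :: ('v,'k::field) mpoly)"
  by (simp add: const_def single_uminus)

definition M :: "('v \<Rightarrow> ('w, 'k::field) mpoly) \<Rightarrow> ('v \<Rightarrow>\<^sub>0 nat) \<Rightarrow> ('w, 'k) mpoly" where
  "M f m = (\<Prod>v\<in>Poly_Mapping.keys m. f v ^ Poly_Mapping.lookup m v)"

lemma M_superset: "finite A \<Longrightarrow> Poly_Mapping.keys m \<subseteq> A \<Longrightarrow> M f m = (\<Prod>v\<in>A. f v ^ Poly_Mapping.lookup m v)"
  unfolding M_def
  by (rule prod.mono_neutral_left) (auto simp: in_keys_iff)

lemma M_add: "M f (m1 + m2) = M f m1 * M f m2"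
proof -
  let ?A = "Poly_Mapping.keys m1 \<union> Poly_Mapping.keys m2"
  have "M f (m1 + m2) = (\<Prod>v\<in>?A. f v ^ Poly_Mapping.lookup (m1+m2) v)"
    by (rule M_superset) (simp_all add: keys_add)
  also have "\<dots> = (\<Prod>v\<in>?A. f v ^ Poly_Mapping.lookup m1 v) * (\<Prod>v\<in>?A. f v ^ Poly_Mapping.lookup m2 v)"
    by (simp add: lookup_add power_add prod.distrib)
  also have "\<dots> = M f m1 * M f m2"
    using M_superset[of ?A m1 f] M_superset[of ?A m2 f] by simp
  finally show ?thesis .
qed

lemma M_zero[simp]: "M f 0 = 1"
  by (simp add: M_def)

lemma subst_superset: "finite A \<Longrightarrow> Poly_Mapping.keys p \<subseteq> A \<Longrightarrow>
   subst f p = (\<Sum>m\<in>A. const (Poly_Mapping.lookup p m) * M f m)"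
  unfolding subst_def M_def[symmetric]
  by (rule sum.mono_neutral_left) (auto simp: in_keys_iff)

lemma subst_add: "subst f (p + q) = subst f p + subst f q"
proof -
  let ?A = "Poly_Mapping.keys p \<union> Poly_Mapping.keys q"
  have "subst f (p + q) = (\<Sum>m\<in>?A. const (Poly_Mapping.lookup (p+q) m) * M f m)"
    by (rule subst_superset) (simp_all add: keys_add)
  also have "\<dots> = (\<Sum>m\<in>?A. const (Poly_Mapping.lookup p m) * M f m) + (\<Sum>m\<in>?A. const (Poly_Mapping.lookup q m) * M f m)"
    by (simp add: lookup_add const_add distrib_right sum.distrib)
  also have "\<dots> = subst f p + subst f q"
    using subst_superset[of ?A p f] subst_superset[of ?A q f] by simp
  finally show ?thesis .
qed

lemma subst_zero[simp]: "subst f 0 = 0"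
  by (simp add: subst_def)

lemma subst_single: "subst f (Poly_Mapping.single m c) = const c * M f m"
  by (subst subst_superset[of "{m}"]) auto

lemma subst_sum: "subst f (sum g A) = (\<Sum>a\<in>A. subst f (g a))"
  by (induction A rule: infinite_finite_induct) (simp_all add: subst_add)

lemma subst_mult: "subst f (p * q) = subst f p * subst f q"
proof -
  have "p * q = (\<Sum>m\<in>Poly_Mapping.keys p. Poly_Mapping.single m (Poly_Mapping.lookup p m)) *
                (\<Sum>m\<in>Poly_Mapping.keys q. Poly_Mapping.single m (Poly_Mapping.lookup q m))"
    using pm_expand[of p] pm_expand[of q] by simp
  also have "\<dots> = (\<Sum>m\<in>Poly_Mapping.keys p. \<Sum>n\<in>Poly_Mapping.keys q.
       Poly_Mapping.single (m + n) (Poly_Mapping.lookup p m * Poly_Mapping.lookup q n))"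
    by (simp add: sum_product mult_single)
  finally have "subst f (p * q) = (\<Sum>m\<in>Poly_Mapping.keys p. \<Sum>n\<in>Poly_Mapping.keys q.
       (const (Poly_Mapping.lookup p m) * M f m) * (const (Poly_Mapping.lookup q n) * M f n))"
    by (simp add: subst_sum subst_single const_mult M_add mult_ac)
  also have "\<dots> = subst f p * subst f q"
    by (simp add: subst_def M_def sum_product)
  finally show ?thesis .
qed

lemma subst_uminus: "subst f (- p) = - subst f p"
  using subst_add[of f p "-p"] by (simp add: minus_unique)

lemma subst_diff: "subst f (p - q) = subst f p - subst f q"
  using subst_add[of f p "-q"] by (simp add: subst_uminus)

lemma subst_one[simp]: "subst f 1 = 1"
  using subst_single[of f 0 1] by simp

lemma subst_power: "subst f (p ^ n) = subst f p ^ n"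
  by (induction n) (simp_all add: subst_mult)

lemma subst_const: "subst f (const c) = const c"
  by (simp add: const_def subst_single)

lemma subst_var: "subst f (var v) = f v"
  by (simp add: var_def subst_single M_def)

lemma sum_single_nat: "(\<Sum>i<n. Poly_Mapping.single v (Suc 0)) = Poly_Mapping.single v n"
  by (induction n) (simp_all add: single_add[symmetric])

lemma M_var: "M var m = Poly_Mapping.single m (1::'k::field)"
proof -
  have "M var m = (\<Prod>v\<in>Poly_Mapping.keys m. Poly_Mapping.single (\<Sum>i<Poly_Mapping.lookup m v. Poly_Mapping.single v 1) (1::'k))"
    unfolding M_def var_def by (simp add: single_pow)
  also have "\<dots> = Poly_Mapping.single (\<Sum>v\<in>Poly_Mapping.keys m. Poly_Mapping.single v (Poly_Mapping.lookup m v)) 1"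
    by (simp add: prod_single sum_single_nat)
  also have "\<dots> = Poly_Mapping.single m 1"
    using pm_expand[of m, symmetric] by simp
  finally show ?thesis .
qed

lemma subst_var_id: "subst var p = (p :: ('v,'k::field) mpoly)"
proof -
  have "subst var p = (\<Sum>m\<in>Poly_Mapping.keys p. Poly_Mapping.single m (Poly_Mapping.lookup p m))"
    unfolding subst_def M_def[symmetric] M_var
    by (simp add: const_def mult_single)
  then show ?thesis using pm_expand[of p, symmetric] by simp
qed

lemma subst_expand: "p = (\<Sum>m\<in>Poly_Mapping.keys p. const (Poly_Mapping.lookup p m) *
     (\<Prod>v\<in>Poly_Mapping.keys m. var v ^ Poly_Mapping.lookup m v))"
  using subst_var_id[of p] unfolding subst_def by simp

definition Fm :: "('v \<Rightarrow> ('w \<Rightarrow>\<^sub>0 nat)) \<Rightarrow> ('v \<Rightarrow>\<^sub>0 nat) \<Rightarrow> ('w \<Rightarrow>\<^sub>0 nat)" where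
  "Fm E m = (\<Sum>v\<in>Poly_Mapping.keys m. \<Sum>i<Poly_Mapping.lookup m v. E v)"

lemma lookup_Fm: "Poly_Mapping.lookup (Fm E m) w = (\<Sum>v\<in>Poly_Mapping.keys m. Poly_Mapping.lookup m v * Poly_Mapping.lookup (E v) w)"
  by (simp add: Fm_def lookup_sum)

lemma M_mono:
  assumes "\<And>v. f v = Poly_Mapping.single (E v) (1::'k::field)"
  shows "M f m = Poly_Mapping.single (Fm E m) 1"
  unfolding M_def assms by (simp add: single_pow prod_single Fm_def)

lemma subst_mono:
  assumes "\<And>v. f v = Poly_Mapping.single (E v) (1::'k::field)"
  shows "Poly_Mapping.lookup (subst f p) w = (\<Sum>m\<in>{m\<in>Poly_Mapping.keys p. Fm E m = w}. Poly_Mapping.lookup p m)"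
proof -
  have "subst f p = (\<Sum>m\<in>Poly_Mapping.keys p. Poly_Mapping.single (Fm E m) (Poly_Mapping.lookup p m))"
    unfolding subst_def M_def[symmetric] M_mono[OF assms]
    by (simp add: const_def mult_single)
  then have "Poly_Mapping.lookup (subst f p) w = (\<Sum>m\<in>Poly_Mapping.keys p. if Fm E m = w then Poly_Mapping.lookup p m else 0)"
    by (simp add: lookup_sum lookup_single when_def)
  also have "\<dots> = (\<Sum>m\<in>{m\<in>Poly_Mapping.keys p. Fm E m = w}. Poly_Mapping.lookup p m)"
    by (simp add: sum.inter_filter)
  finally show ?thesis .
qed

definition Pset :: "'v set \<Rightarrow> ('v, 'k::field) mpoly set" where
  "Pset V = {p. \<forall>m\<in>Poly_Mapping.keys p. Poly_Mapping.keys m \<subseteq> V}"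

lemma RG_Pset: "RG d E = Pset (Collect (stable d E))"
  by (simp add: RG_def Pset_def)

lemma Pset_zero[simp]: "0 \<in> Pset V"
  by (simp add: Pset_def)
lemma Pset_const[simp]: "const c \<in> Pset V"
  by (simp add: Pset_def const_def)
lemma Pset_one[simp]: "1 \<in> Pset V"
  using Pset_const[of 1 V] by simp
lemma Pset_var: "v \<in> V \<Longrightarrow> var v \<in> Pset V"
  by (simp add: Pset_def var_def)
lemma Pset_add: "p \<in> Pset V \<Longrightarrow> q \<in> Pset V \<Longrightarrow> p + q \<in> Pset V"
  unfolding Pset_def using keys_add[of p q] by blast
lemma Pset_uminus: "p \<in> Pset V \<Longrightarrow> - p \<in> Pset V"
  unfolding Pset_def by simp
lemma Pset_diff: "p \<in> Pset V \<Longrightarrow> q \<in> Pset V \<Longrightarrow> p - q \<in> Pset V"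
  unfolding Pset_def using keys_diff[of p q] by blast
lemma Pset_mult: "p \<in> Pset V \<Longrightarrow> q \<in> Pset V \<Longrightarrow> p * q \<in> Pset V"
proof -
  assume p: "p \<in> Pset V" and q: "q \<in> Pset V"
  show ?thesis unfolding Pset_def mem_Collect_eq
  proof
    fix m assume "m \<in> Poly_Mapping.keys (p * q)"
    then obtain a b where "m = a + b" "a \<in> Poly_Mapping.keys p" "b \<in> Poly_Mapping.keys q"
      using keys_mult by blast
    moreover have "Poly_Mapping.keys a \<subseteq> V" "Poly_Mapping.keys b \<subseteq> V"
      using p q calculation unfolding Pset_def by auto
    ultimately show "Poly_Mapping.keys m \<subseteq> V"
      using keys_add[of a b] by auto
  qed
qed
lemma Pset_power: "p \<in> Pset V \<Longrightarrow> p ^ n \<in> Pset V"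
  by (induction n) (simp_all add: Pset_mult)
lemma Pset_sum: "(\<And>a. a \<in> A \<Longrightarrow> g a \<in> Pset V) \<Longrightarrow> sum g A \<in> Pset V"
  by (induction A rule: infinite_finite_induct) (simp_all add: Pset_add)
lemma Pset_prod: "(\<And>a. a \<in> A \<Longrightarrow> g a \<in> Pset V) \<Longrightarrow> prod g A \<in> Pset V"
  by (induction A rule: infinite_finite_induct) (simp_all add: Pset_mult)

lemma ideal_sub: "T \<subseteq> Pset V \<Longrightarrow> ideal_gen (Pset V) T \<subseteq> Pset V"
proof
  fix p assume T: "T \<subseteq> Pset V" and "p \<in> ideal_gen (Pset V) T"
  from this(2) show "p \<in> Pset V"
    by (induction rule: ideal_gen.induct) (use T in \<open>auto simp: Pset_add Pset_mult\<close>)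
qed

lemma ideal_least: "T \<subseteq> J \<Longrightarrow> 0 \<in> J \<Longrightarrow> (\<And>p q. p \<in> J \<Longrightarrow> q \<in> J \<Longrightarrow> p + q \<in> J)
  \<Longrightarrow> (\<And>r p. r \<in> A \<Longrightarrow> p \<in> J \<Longrightarrow> r * p \<in> J) \<Longrightarrow> ideal_gen A T \<subseteq> J"
proof
  fix p assume a: "T \<subseteq> J" "0 \<in> J" "(\<And>p q. p \<in> J \<Longrightarrow> q \<in> J \<Longrightarrow> p + q \<in> J)"
    "(\<And>r p. r \<in> A \<Longrightarrow> p \<in> J \<Longrightarrow> r * p \<in> J)" and "p \<in> ideal_gen A T"
  from this(5) show "p \<in> J"
    by (induction rule: ideal_gen.induct) (use a in auto)
qed

lemma ideal_mono: "T \<subseteq> T' \<Longrightarrow> ideal_gen A T \<subseteq> ideal_gen A T'"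
  by (rule ideal_least) (auto intro: ideal_gen.intros)

lemma ideal_diff: "p \<in> ideal_gen (Pset V) T \<Longrightarrow> q \<in> ideal_gen (Pset V) T \<Longrightarrow> p - q \<in> ideal_gen (Pset V) T"
proof -
  assume p: "p \<in> ideal_gen (Pset V) T" and q: "q \<in> ideal_gen (Pset V) T"
  have "const (-1) * q \<in> ideal_gen (Pset V) T"
    by (rule ideal_gen.mult) (simp_all add: q)
  then have "p + const (-1) * q \<in> ideal_gen (Pset V) T"
    using p by (simp add: ideal_gen.add)
  then show ?thesis by (simp add: const_minus_one)
qed

lemma ideal_uminus: "q \<in> ideal_gen (Pset V) T \<Longrightarrow> - q \<in> ideal_gen (Pset V) T"
  using ideal_diff[of 0 V T q] by (simp add: ideal_gen.zero)

lemma ideal_mult_right: "p \<in> ideal_gen A T \<Longrightarrow> r \<in> A \<Longrightarrow> p * r \<in> ideal_gen A T"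
  using ideal_gen.mult[of r A p T] by (simp add: mult.commute)

lemma stable_subset: "stable d E S \<Longrightarrow> T \<subseteq> S \<Longrightarrow> stable d E T"
  unfolding stable_def by blast

lemma stable_finite: "stable d E S \<Longrightarrow> finite S"
  unfolding stable_def using finite_subset by blast

definition gpi :: "nat set \<Rightarrow> (nat option, 'k::field) mpoly" where
  "gpi S = var None * (\<Prod>j\<in>S. var (Some j))"

lemma piG_eq: "piG = subst gpi"
  by (simp add: piG_def gpi_def[abs_def])

lemma piG_add: "piG (p + q) = piG p + piG q" by (simp add: piG_eq subst_add)
lemma piG_diff: "piG (p - q) = piG p - piG q" by (simp add: piG_eq subst_diff)
lemma piG_mult: "piG (p * q) = piG p * piG q" by (simp add: piG_eq subst_mult)
lemma piG_power: "piG (p ^ n) = piG p ^ n" by (simp add: piG_eq subst_power)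
lemma piG_var: "piG (var S) = gpi S" by (simp add: piG_eq subst_var)
lemma piG_zero[simp]: "piG 0 = 0" by (simp add: piG_eq)

lemma gpi_union: "S1 \<inter> S2 = {} \<Longrightarrow> finite S1 \<Longrightarrow> finite S2 \<Longrightarrow>
  gpi S1 * gpi S2 = var None * var None * (\<Prod>j\<in>S1 \<union> S2. var (Some j))"
  by (simp add: gpi_def prod.union_disjoint mult_ac)

lemma gpi_eq4: "finite S1 \<Longrightarrow> finite S2 \<Longrightarrow> finite S3 \<Longrightarrow> finite S4 \<Longrightarrow>
  S1 \<inter> S2 = {} \<Longrightarrow> S3 \<inter> S4 = {} \<Longrightarrow> S1 \<union> S2 = S3 \<union> S4 \<Longrightarrow>
  (gpi S1 * gpi S2 :: (nat option, 'k::field) mpoly) = gpi S3 * gpi S4"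
  by (simp add: gpi_union)

lemma mdeg_superset: "finite A \<Longrightarrow> Poly_Mapping.keys m \<subseteq> A \<Longrightarrow> mdeg m = (\<Sum>v\<in>A. Poly_Mapping.lookup m v)"
  unfolding mdeg_def by (rule sum.mono_neutral_left) (auto simp: in_keys_iff)

lemma mdeg_add: "mdeg (m1 + m2) = mdeg m1 + mdeg m2"
proof -
  let ?A = "Poly_Mapping.keys m1 \<union> Poly_Mapping.keys m2"
  have "mdeg (m1 + m2) = (\<Sum>v\<in>?A. Poly_Mapping.lookup (m1+m2) v)"
    by (rule mdeg_superset) (simp_all add: keys_add)
  also have "\<dots> = (\<Sum>v\<in>?A. Poly_Mapping.lookup m1 v) + (\<Sum>v\<in>?A. Poly_Mapping.lookup m2 v)"
    by (simp add: lookup_add sum.distrib)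
  also have "\<dots> = mdeg m1 + mdeg m2"
    using mdeg_superset[of ?A m1] mdeg_superset[of ?A m2] by simp
  finally show ?thesis .
qed

lemma mdeg_single: "mdeg (Poly_Mapping.single v (Suc 0)) = 1"
  by (simp add: mdeg_def)

lemma keys_var_mult: "Poly_Mapping.keys (var S1 * var S2 :: ('v,'k::field) mpoly) = {Poly_Mapping.single S1 1 + Poly_Mapping.single S2 1}"
  by (simp add: var_def mult_single)

lemma mdeg_gen: "m \<in> Poly_Mapping.keys (var S1 * var S2 - var S3 * var S4 :: ('v,'k::field) mpoly) \<Longrightarrow> mdeg m = 2"
proof -
  assume "m \<in> Poly_Mapping.keys (var S1 * var S2 - var S3 * var S4 :: ('v,'k::field) mpoly)"
  then have "m \<in> Poly_Mapping.keys (var S1 * var S2 :: ('v,'k::field) mpoly) \<union> Poly_Mapping.keys (var S3 * var S4 :: ('v,'k::field) mpoly)"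
    using keys_diff[of "var S1 * var S2 :: ('v,'k::field) mpoly" "var S3 * var S4"] by blast
  then show ?thesis by (auto simp: keys_var_mult mdeg_add mdeg_single)
qed

lemma JG_gens_sub: "JG_gens d E \<subseteq> homog_part 2 (IG d E)"
proof
  fix x assume "x \<in> JG_gens d E"
  then obtain S1 S2 S3 S4 where x: "x = var S1 * var S2 - var S3 * var S4"
    and st: "stable d E S1" "stable d E S2" "stable d E S3" "stable d E S4"
    and dj: "S1 \<inter> S2 = {}" "S3 \<inter> S4 = {}" and un: "S1 \<union> S2 = S3 \<union> S4"
    unfolding JG_gens_def by blast
  have "x \<in> RG d E"
    unfolding x RG_Pset using st by (intro Pset_diff Pset_mult Pset_var) auto
  moreover have "piG x = 0"
    unfolding x piG_diff piG_mult piG_var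
    using gpi_eq4[OF _ _ _ _ dj un] st stable_finite by simp
  moreover have "mdeg m = 2" if "m \<in> Poly_Mapping.keys x" for m
    using that unfolding x by (rule mdeg_gen)
  ultimately show "x \<in> homog_part 2 (IG d E)"
    unfolding homog_part_def IG_def by blast
qed

lemma LG_gens_sub: "LG_gens d E \<subseteq> JG_gens d E"
proof
  fix x assume "x \<in> LG_gens d E"
  then obtain S i where x: "x = var (S - {i}) * var {i} - var S * var {}" and st: "stable d E S"
    and i: "i \<in> S" unfolding LG_gens_def by blast
  show "x \<in> JG_gens d E"
    unfolding JG_gens_def x
    using st i stable_subset[OF st, of "S - {i}"] stable_subset[OF st, of "{i}"] stable_subset[OF st, of "{}"]
    by blast
qed

lemma IG_closed: "ideal_gen (RG d E) (homog_part 2 (IG d E)) \<subseteq> IG d E"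
  apply (rule ideal_least)
     apply (auto simp: homog_part_def IG_def)[1]
    apply (simp add: IG_def RG_Pset)
   apply (simp add: IG_def RG_Pset Pset_add piG_add)
  apply (simp add: IG_def RG_Pset Pset_mult piG_mult)
  done

lemma gens_RG: "homog_part 2 (IG d E) \<subseteq> RG d E"
  by (auto simp: homog_part_def IG_def)

lemma single_mult_zero:
  assumes "Poly_Mapping.single (k::'v \<Rightarrow>\<^sub>0 nat) (1::'k::field) * f = 0"
  shows "f = 0"
proof (rule poly_mapping_eqI)
  fix x
  have "Poly_Mapping.single k (1::'k) * f = (\<Sum>m\<in>Poly_Mapping.keys f. Poly_Mapping.single (k + m) (Poly_Mapping.lookup f m))"
    by (subst pm_expand[of f]) (simp add: sum_distrib_left mult_single)
  then have "Poly_Mapping.lookup (Poly_Mapping.single k (1::'k) * f) (k + x) = (\<Sum>m\<in>Poly_Mapping.keys f. if m = x then Poly_Mapping.lookup f m else 0)"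
    by (simp add: lookup_sum lookup_single when_def add_left_cancel del: sum.delta)
  also have "\<dots> = Poly_Mapping.lookup f x"
    by (simp add: sum.delta in_keys_iff)
  finally show "Poly_Mapping.lookup f x = Poly_Mapping.lookup 0 x" using assms by simp
qed

lemma sat_IG: "saturation (RG d E) (IG d E) (var {}) \<subseteq> (IG d E :: (nat set, 'k::field) mpoly set)"
proof
  fix p :: "(nat set, 'k) mpoly"
  assume "p \<in> saturation (RG d E) (IG d E) (var {})"
  then obtain n where p: "p \<in> RG d E" and "var {} ^ n * p \<in> IG d E"
    unfolding saturation_def by blast
  then have "gpi {} ^ n * piG p = 0"
    by (simp add: IG_def piG_mult piG_power piG_var)
  moreover have "gpi {} ^ n = Poly_Mapping.single (\<Sum>i<n. Poly_Mapping.single None 1) (1::'k)"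
    by (simp add: gpi_def var_def single_pow)
  ultimately have "piG p = 0" using single_mult_zero by metis
  then show "p \<in> IG d E" using p by (simp add: IG_def)
qed

lemma sat_mono: "I \<subseteq> J \<Longrightarrow> saturation A I h \<subseteq> saturation A J h"
  unfolding saturation_def by blast

definition Tset :: "nat set set" where "Tset = {S. S = {} \<or> (\<exists>j. S = {j})}"

definition Egpi :: "nat set \<Rightarrow> (nat option \<Rightarrow>\<^sub>0 nat)" where
  "Egpi S = Poly_Mapping.single None 1 + (\<Sum>j\<in>S. Poly_Mapping.single (Some j) 1)"

lemma gpi_single: "gpi S = Poly_Mapping.single (Egpi S) (1::'k::field)"
  by (simp add: gpi_def var_def prod_single mult_single Egpi_def)

lemma Egpi_None: "Poly_Mapping.lookup (Egpi S) None = 1"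
  by (simp add: Egpi_def lookup_add lookup_sum lookup_single)

lemma Egpi_Some: "S \<in> Tset \<Longrightarrow> Poly_Mapping.lookup (Egpi S) (Some j) = (if S = {j} then 1 else 0)"
  by (auto simp: Tset_def Egpi_def lookup_add lookup_sum lookup_single when_def split: if_splits)

lemma Fm_None: "Poly_Mapping.lookup (Fm Egpi m) None = mdeg m"
  by (simp add: lookup_Fm Egpi_None mdeg_def)

lemma Fm_Some: "Poly_Mapping.keys m \<subseteq> Tset \<Longrightarrow> Poly_Mapping.lookup (Fm Egpi m) (Some j) = Poly_Mapping.lookup m {j}"
proof -
  assume k: "Poly_Mapping.keys m \<subseteq> Tset"
  have "Poly_Mapping.lookup (Fm Egpi m) (Some j) = (\<Sum>v\<in>Poly_Mapping.keys m. if v = {j} then Poly_Mapping.lookup m v else 0)"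
    unfolding lookup_Fm
  proof (rule sum.cong)
    fix v assume "v \<in> Poly_Mapping.keys m"
    then have "v \<in> Tset" using k by auto
    then show "Poly_Mapping.lookup m v * Poly_Mapping.lookup (Egpi v) (Some j) = (if v = {j} then Poly_Mapping.lookup m v else 0)"
      by (simp add: Egpi_Some)
  qed simp
  also have "\<dots> = Poly_Mapping.lookup m {j}"
    by (simp add: sum.delta in_keys_iff)
  finally show ?thesis .
qed

lemma Fm_inj:
  assumes k1: "Poly_Mapping.keys m1 \<subseteq> Tset" and k2: "Poly_Mapping.keys m2 \<subseteq> Tset"
    and eq: "Fm Egpi m1 = Fm Egpi m2"
  shows "m1 = m2"
proof -
  have ne: "Poly_Mapping.lookup m1 v = Poly_Mapping.lookup m2 v" if nv: "v \<noteq> {}" for v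
  proof (cases "v \<in> Tset")
    case True
    then obtain j where "v = {j}" using nv by (auto simp: Tset_def)
    then show ?thesis using Fm_Some[OF k1, of j] Fm_Some[OF k2, of j] eq by simp
  next
    case False
    then have "v \<notin> Poly_Mapping.keys m1" "v \<notin> Poly_Mapping.keys m2" using k1 k2 by auto
    then show ?thesis by (simp add: in_keys_iff)
  qed
  let ?A = "Poly_Mapping.keys m1 \<union> Poly_Mapping.keys m2 \<union> {{}}"
  have fin: "finite ?A" by simp
  have "mdeg m1 = mdeg m2" using Fm_None[of m1] Fm_None[of m2] eq by simp
  moreover have "mdeg m1 = Poly_Mapping.lookup m1 {} + (\<Sum>v\<in>?A - {{}}. Poly_Mapping.lookup m1 v)"
  proof -
    have "mdeg m1 = (\<Sum>v\<in>?A. Poly_Mapping.lookup m1 v)" by (rule mdeg_superset[OF fin]) auto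
    then show ?thesis using sum.remove[OF fin, of "{}"] by simp
  qed
  moreover have "mdeg m2 = Poly_Mapping.lookup m2 {} + (\<Sum>v\<in>?A - {{}}. Poly_Mapping.lookup m2 v)"
  proof -
    have "mdeg m2 = (\<Sum>v\<in>?A. Poly_Mapping.lookup m2 v)" by (rule mdeg_superset[OF fin]) auto
    then show ?thesis using sum.remove[OF fin, of "{}"] by simp
  qed
  moreover have "(\<Sum>v\<in>?A - {{}}. Poly_Mapping.lookup m1 v) = (\<Sum>v\<in>?A - {{}}. Poly_Mapping.lookup m2 v)"
    using ne by (intro sum.cong) auto
  ultimately have "Poly_Mapping.lookup m1 {} = Poly_Mapping.lookup m2 {}" by simp
  with ne show ?thesis by (intro poly_mapping_eqI) metis
qed

lemma piG_T_inj:
  assumes q: "q \<in> Pset Tset" and z: "piG q = (0 :: (nat option, 'k::field) mpoly)"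
  shows "q = 0"
proof (rule ccontr)
  assume "q \<noteq> 0"
  then obtain m where m: "m \<in> Poly_Mapping.keys q" by fastforce
  have "{m' \<in> Poly_Mapping.keys q. Fm Egpi m' = Fm Egpi m} = {m}"
    using m q Fm_inj unfolding Pset_def by blast
  then have "Poly_Mapping.lookup (piG q) (Fm Egpi m) = Poly_Mapping.lookup q m"
    unfolding piG_eq subst_mono[OF gpi_single, where p = q and w = "Fm Egpi m"] by simp
  then show False using z m by (simp add: in_keys_iff)
qed

lemma stable_empty: "simple_graph_on d E \<Longrightarrow> stable d E {}"
  unfolding simple_graph_on_def stable_def by fastforce

lemma LG_gens_RG: "LG_gens d E \<subseteq> Pset (Collect (stable d E))"
  using LG_gens_sub JG_gens_sub gens_RG RG_Pset by blast

lemma LG_RG: "LG d E \<subseteq> Pset (Collect (stable d E))"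
  unfolding LG_def RG_Pset by (rule ideal_sub[OF LG_gens_RG])

lemma LG_IG: "LG d E \<subseteq> IG d E"
proof -
  have "LG d E \<subseteq> JG d E" unfolding LG_def JG_def by (rule ideal_mono[OF LG_gens_sub])
  also have "\<dots> \<subseteq> ideal_gen (RG d E) (homog_part 2 (IG d E))" unfolding JG_def by (rule ideal_mono[OF JG_gens_sub])
  also have "\<dots> \<subseteq> IG d E" by (rule IG_closed)
  finally show ?thesis .
qed

lemma L_diff: "p \<in> LG d E \<Longrightarrow> q \<in> LG d E \<Longrightarrow> p - q \<in> LG d E"
  unfolding LG_def RG_Pset by (rule ideal_diff)
lemma L_add: "p \<in> LG d E \<Longrightarrow> q \<in> LG d E \<Longrightarrow> p + q \<in> LG d E"
  unfolding LG_def by (rule ideal_gen.add)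
lemma L_mult: "r \<in> Pset (Collect (stable d E)) \<Longrightarrow> p \<in> LG d E \<Longrightarrow> r * p \<in> LG d E"
  unfolding LG_def RG_Pset by (rule ideal_gen.mult)
lemma L_zero: "0 \<in> LG d E"
  unfolding LG_def by (rule ideal_gen.zero)
lemma L_gen: "p \<in> LG_gens d E \<Longrightarrow> p \<in> LG d E"
  unfolding LG_def by (rule ideal_gen.gen)

lemma ring_step: "(a::'a::comm_ring_1) * (x ^ k * s' - P') - x ^ k * (s' * a - s * x) = x^k * x * s - a * P'"
  by (simp add: algebra_simps)

lemma var_L:
  assumes "stable d E S" "S \<noteq> {}"
  shows "(var {} ^ (card S - 1) * var S - (\<Prod>j\<in>S. var {j}) :: (nat set, 'k::field) mpoly) \<in> LG d E"
  using assms
proof (induction n \<equiv> "card S" arbitrary: S)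
  case 0
  then show ?case using stable_finite by fastforce
next
  case (Suc n)
  show ?case
  proof (cases n)
    case 0
    then have "card S = 1" using Suc.hyps(2) by simp
    then obtain j where "S = {j}" by (rule card_1_singletonE)
    then show ?thesis by (simp add: L_zero)
  next
    case (Suc k)
    have fin: "finite S" using Suc.prems stable_finite by blast
    obtain i where i: "i \<in> S" using Suc.prems by blast
    let ?S' = "S - {i}"
    have cS': "card ?S' = n" using Suc.hyps(2) i fin by simp
    have ne: "?S' \<noteq> {}"
    proof
      assume "?S' = {}"
      then have "card ?S' = 0" by (simp only: card.empty)
      with cS' \<open>n = Suc k\<close> show False by simp
    qed
    have stS': "stable d E ?S'" using stable_subset[OF Suc.prems(1)] by blast
    have sti: "stable d E {i}" using stable_subset[OF Suc.prems(1)] i by blast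
    have st0: "stable d E {}" using stable_subset[OF Suc.prems(1)] by blast
    have IH: "(var {} ^ (n - 1) * var ?S' - (\<Prod>j\<in>?S'. var {j}) :: (nat set, 'k::field) mpoly) \<in> LG d E"
      using Suc.hyps(1)[OF cS'[symmetric] stS' ne] cS' by simp
    have gen: "(var ?S' * var {i} - var S * var {} :: (nat set, 'k::field) mpoly) \<in> LG d E"
      apply (rule L_gen) unfolding LG_gens_def mem_Collect_eq
      apply (rule exI[of _ S], rule exI[of _ i])
      using Suc.prems(1) i Suc.hyps(2) \<open>n = Suc k\<close> by auto
    have "(var {i} * (var {} ^ (n - 1) * var ?S' - (\<Prod>j\<in>?S'. var {j})) - var {} ^ (n - 1) * (var ?S' * var {i} - var S * var {}) :: (nat set, 'k) mpoly)
        \<in> LG d E"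
    proof (rule L_diff)
      show "(var {i} * (var {} ^ (n - 1) * var ?S' - (\<Prod>j\<in>?S'. var {j})) :: (nat set, 'k) mpoly) \<in> LG d E"
        by (rule L_mult[OF _ IH]) (simp add: Pset_var sti)
      show "(var {} ^ (n - 1) * (var ?S' * var {i} - var S * var {}) :: (nat set, 'k) mpoly) \<in> LG d E"
        by (rule L_mult[OF _ gen]) (intro Pset_power Pset_var, simp add: st0)
    qed
    moreover have "(\<Prod>j\<in>S. var {j}) = (var {i} * (\<Prod>j\<in>?S'. var {j}) :: (nat set, 'k::field) mpoly)"
      using prod.remove[OF fin i] by simp
    moreover have "(var {} ^ (card S - 1) :: (nat set, 'k::field) mpoly) = var {} ^ (n - 1) * var {}"
      using Suc.hyps(2) \<open>n = Suc k\<close> by (simp add: mult.commute flip: Suc.hyps(2))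
    ultimately show ?thesis by (simp add: ring_step)
  qed
qed

definition good :: "nat \<Rightarrow> nat set set \<Rightarrow> (nat set, 'k::field) mpoly \<Rightarrow> bool" where
  "good d E p \<longleftrightarrow> p \<in> Pset (Collect (stable d E)) \<and>
     (\<exists>N q. q \<in> Pset Tset \<and> var {} ^ N * p - q \<in> LG d E)"

lemma T_var0: "var {} \<in> Pset Tset" by (rule Pset_var) (simp add: Tset_def)
lemma T_var1: "var {j} \<in> Pset Tset" by (rule Pset_var) (simp add: Tset_def)

context
  fixes d :: nat and E :: "nat set set"
  assumes st0: "stable d E {}"
begin

lemma x_RG: "var {} ^ N \<in> Pset (Collect (stable d E))"
  by (intro Pset_power Pset_var) (simp add: st0)

lemma good_add: "good d E p \<Longrightarrow> good d E r \<Longrightarrow> good d E (p + r)"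
proof -
  assume gp: "good d E p" and gr: "good d E r"
  then obtain N q M q' where p: "p \<in> Pset (Collect (stable d E))" and r: "r \<in> Pset (Collect (stable d E))"
    and q: "q \<in> Pset Tset" and q': "q' \<in> Pset Tset"
    and d1: "var {} ^ N * p - q \<in> LG d E" and d2: "var {} ^ M * r - q' \<in> LG d E"
    unfolding good_def by blast
  have "var {} ^ M * (var {} ^ N * p - q) + var {} ^ N * (var {} ^ M * r - q') \<in> LG d E"
    by (intro L_add L_mult x_RG d1 d2)
  moreover have "var {} ^ M * (var {} ^ N * p - q) + var {} ^ N * (var {} ^ M * r - q')
     = var {} ^ (N + M) * (p + r) - (var {} ^ M * q + var {} ^ N * q')"
    by (simp add: algebra_simps power_add)
  moreover have "var {} ^ M * q + var {} ^ N * q' \<in> Pset Tset"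
    by (intro Pset_add Pset_mult Pset_power T_var0 q q')
  ultimately show ?thesis unfolding good_def using Pset_add[OF p r] by metis
qed

lemma good_mult: "good d E p \<Longrightarrow> good d E r \<Longrightarrow> good d E (p * r)"
proof -
  assume gp: "good d E p" and gr: "good d E r"
  then obtain N q M q' where p: "p \<in> Pset (Collect (stable d E))" and r: "r \<in> Pset (Collect (stable d E))"
    and q: "q \<in> Pset Tset" and q': "q' \<in> Pset Tset"
    and d1: "var {} ^ N * p - q \<in> LG d E" and d2: "var {} ^ M * r - q' \<in> LG d E"
    unfolding good_def by blast
  have qR: "q \<in> Pset (Collect (stable d E))"
  proof -
    have "var {} ^ N * p - (var {} ^ N * p - q) \<in> Pset (Collect (stable d E))"
      by (rule Pset_diff[OF Pset_mult[OF x_RG p] LG_RG[THEN subsetD, OF d1]])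
    then show ?thesis by simp
  qed
  have "(var {} ^ N * p - q) * (var {} ^ M * r) + q * (var {} ^ M * r - q') \<in> LG d E"
  proof (rule L_add)
    show "(var {} ^ N * p - q) * (var {} ^ M * r) \<in> LG d E"
      using ideal_mult_right[OF d1[unfolded LG_def RG_Pset] Pset_mult[OF x_RG r]]
      by (simp add: LG_def RG_Pset)
    show "q * (var {} ^ M * r - q') \<in> LG d E"
      by (rule L_mult[OF qR d2])
  qed
  moreover have "(var {} ^ N * p - q) * (var {} ^ M * r) + q * (var {} ^ M * r - q')
     = var {} ^ (N + M) * (p * r) - q * q'"
    by (simp add: algebra_simps power_add)
  moreover have "q * q' \<in> Pset Tset"
    by (intro Pset_mult q q')
  ultimately show ?thesis unfolding good_def using Pset_mult[OF p r] by metis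
qed

lemma good_const: "good d E (const c)"
  unfolding good_def
  apply (intro conjI Pset_const)
  apply (rule exI[of _ 0], rule exI[of _ "const c"])
  by (simp add: L_zero)

lemma good_var: "stable d E S \<Longrightarrow> good d E (var S)"
proof -
  assume st: "stable d E S"
  show ?thesis
  proof (cases "S = {}")
    case True
    then show ?thesis unfolding good_def
      apply (intro conjI Pset_var)
       apply (simp add: st0)
      apply (rule exI[of _ 0], rule exI[of _ "var {}"])
      by (simp add: L_zero T_var0)
  next
    case False
    show ?thesis unfolding good_def
      apply (intro conjI Pset_var)
       apply (simp add: st)
      apply (rule exI[of _ "card S - 1"], rule exI[of _ "\<Prod>j\<in>S. var {j}"])
      using var_L[OF st False] by (simp add: Pset_prod T_var1)
  qed
qed

lemma good_sum: "(\<And>a. a \<in> A \<Longrightarrow> good d E (g a)) \<Longrightarrow> good d E (sum g A)"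
proof (induction A rule: infinite_finite_induct)
  case (infinite A) then show ?case using good_const[of 0] by simp
next
  case empty then show ?case using good_const[of 0] by simp
next
  case (insert x F) then show ?case by (simp add: good_add)
qed

lemma good_prod: "(\<And>a. a \<in> A \<Longrightarrow> good d E (g a)) \<Longrightarrow> good d E (prod g A)"
proof (induction A rule: infinite_finite_induct)
  case (infinite A) then show ?case using good_const[of 1] by simp
next
  case empty then show ?case using good_const[of 1] by simp
next
  case (insert x F) then show ?case by (simp add: good_mult)
qed

lemma good_power: "good d E p \<Longrightarrow> good d E (p ^ n)"
proof (induction n)
  case 0 then show ?case using good_const[of 1] by simp
next
  case (Suc n) then show ?case by (simp add: good_mult)
qed

lemma good_all: "p \<in> Pset (Collect (stable d E)) \<Longrightarrow> good d E p"
proof -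
  assume p: "p \<in> Pset (Collect (stable d E))"
  have "good d E (\<Sum>m\<in>Poly_Mapping.keys p. const (Poly_Mapping.lookup p m) *
     (\<Prod>v\<in>Poly_Mapping.keys m. var v ^ Poly_Mapping.lookup m v))"
  proof (intro good_sum good_mult good_const good_prod good_power good_var)
    fix m v assume "m \<in> Poly_Mapping.keys p" "v \<in> Poly_Mapping.keys m"
    then show "stable d E v" using p unfolding Pset_def by blast
  qed
  then show ?thesis using subst_expand[of p] by simp
qed

lemma IG_sat: "IG d E \<subseteq> saturation (RG d E) (LG d E) (var {})"
proof
  fix p :: "(nat set, 'k::field) mpoly" assume pI: "p \<in> IG d E"
  then have p: "p \<in> Pset (Collect (stable d E))" by (simp add: IG_def RG_Pset)
  then obtain N q where q: "q \<in> Pset Tset" and dl: "var {} ^ N * p - q \<in> LG d E"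
    using good_all unfolding good_def by blast
  have "piG (var {} ^ N * p - q) = 0" using dl LG_IG by (auto simp: IG_def)
  moreover have "piG p = 0" using pI by (simp add: IG_def)
  ultimately have "piG q = 0" by (simp add: piG_diff piG_mult)
  then have "q = 0" using piG_T_inj q by blast
  then have "var {} * (var {} ^ N * p) \<in> LG d E"
    using dl \<open>q = 0\<close> by (intro L_mult[OF Pset_var]) (simp_all add: st0)
  then have "var {} ^ Suc N * p \<in> LG d E" by (simp add: mult.assoc)
  then show "p \<in> saturation (RG d E) (LG d E) (var {})"
    unfolding saturation_def using p RG_Pset by blast
qed

end

lemma chain:
  fixes d :: nat and E :: "nat set set"
  assumes st0: "stable d E {}"
  shows "saturation (RG d E) (LG d E) (var {}) \<subseteq> saturation (RG d E) (JG d E) (var {})"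
    and "saturation (RG d E) (JG d E) (var {}) \<subseteq> saturation (RG d E) (ideal_gen (RG d E) (homog_part 2 (IG d E))) (var {})"
    and "saturation (RG d E) (ideal_gen (RG d E) (homog_part 2 (IG d E))) (var {}) \<subseteq> (IG d E :: (nat set, 'k::field) mpoly set)"
    and "(IG d E :: (nat set, 'k::field) mpoly set) \<subseteq> saturation (RG d E) (LG d E) (var {})"
proof -
  show "saturation (RG d E) (LG d E) (var {}) \<subseteq> saturation (RG d E) (JG d E) (var {})"
    unfolding LG_def JG_def by (intro sat_mono ideal_mono LG_gens_sub)
  show "saturation (RG d E) (JG d E) (var {}) \<subseteq> saturation (RG d E) (ideal_gen (RG d E) (homog_part 2 (IG d E))) (var {})"
    unfolding JG_def by (intro sat_mono ideal_mono JG_gens_sub)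
  show "saturation (RG d E) (ideal_gen (RG d E) (homog_part 2 (IG d E))) (var {}) \<subseteq> (IG d E :: (nat set, 'k::field) mpoly set)"
    using sat_mono[OF IG_closed] sat_IG by blast
  show "(IG d E :: (nat set, 'k::field) mpoly set) \<subseteq> saturation (RG d E) (LG d E) (var {})"
    by (rule IG_sat[OF st0])
qed

theorem lemma4p1:
  fixes d :: nat and E :: "nat set set"
  assumes "simple_graph_on d E"
  shows "saturation (RG d E) (LG d E) (var {}) = saturation (RG d E) (JG d E) (var {})
       \<and> saturation (RG d E) (JG d E) (var {})
           = saturation (RG d E) (ideal_gen (RG d E) (homog_part 2 (IG d E))) (var {})
       \<and> saturation (RG d E) (ideal_gen (RG d E) (homog_part 2 (IG d E))) (var {})
           = (IG d E :: (nat set, 'k::field) mpoly set)"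
proof -
  note c = chain[OF stable_empty[OF assms]]
  have e1: "saturation (RG d E) (JG d E) (var {}) \<subseteq> saturation (RG d E) (LG d E) (var {})"
    by (rule order_trans[OF c(2) order_trans[OF c(3) c(4)]])
  have e2: "saturation (RG d E) (ideal_gen (RG d E) (homog_part 2 (IG d E))) (var {}) \<subseteq> saturation (RG d E) (JG d E) (var {})"
    by (rule order_trans[OF c(3) order_trans[OF c(4) c(1)]])
  have e3: "(IG d E :: (nat set, 'k::field) mpoly set) \<subseteq> saturation (RG d E) (ideal_gen (RG d E) (homog_part 2 (IG d E))) (var {})"
    by (rule order_trans[OF c(4) order_trans[OF c(1) c(2)]])
  show ?thesis
    by (intro conjI subset_antisym c(1) c(2) c(3) e1 e2 e3)
qed

end
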